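(* Let $\mathcal E$ be a semilattice with zero, $\mathcal B$ a Boolean algebra, $\pi:\mathcal E\to\mathcal B$ a representation, and $\varphi$ a character of $\mathcal E$. Then there exists a character $\chi$ of $\mathcal B$ preserving meets and joins such that $\varphi=\chi\circ\pi$ if and only if $\varphi$ is $\pi$-tight, i.e. for all $n\ge1$ and $x,y_1,\dots,y_n\in\mathcal E$, $$\pi(x)\le\bigvee_{i=1}^n\pi(y_i)\ \Longrightarrow\ \varphi(x)\le\bigvee_{i=1}^n\varphi(y_i).$$
   Context: Boolean algebras need not have a top element: they have finite meets and joins, a bottom element $0$ and relative complements (generalized Boolean algebras). A representation of a semilattice $\mathcal E$ with zero in $\mathcal B$ is a map $\pi$ with $\pi(0)=0$ and $\pi(xy)=\pi(x)\wedge\pi(y)$. A character of $\mathcal E$ is a map $\varphi:\mathcal E\to\{0,1\}$, not identically zero, with $\varphi(0)=0$ and $\varphi(xy)=\varphi(x)\varphi(y)$. A character of $\mathcal B$ preserving meets and joins is a nonzero map $\chi:\mathcal B\to\{0,1\}$ with $\chi(0)=0$, $\chi(a\wedge b)=\chi(a)\wedge\chi(b)$, $\chi(a\vee b)=\chi(a)\vee\chi(b)$. *)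

theory Defs
  imports Main
begin

class gen_boolean_algebra = distrib_lattice + order_bot +
  assumes relative_complement: "a \<le> b \<Longrightarrow> \<exists>c. inf a c = bot \<and> sup a c = b"

text \<open>A semilattice with zero is modelled by the sort {semilattice_inf, order_bot}:
  the product xy is inf x y and the zero is bot.\<close>

definition representation :: "('a::{semilattice_inf,order_bot} \<Rightarrow> 'b::gen_boolean_algebra) \<Rightarrow> bool" where
  "representation \<pi> \<longleftrightarrow> \<pi> bot = bot \<and> (\<forall>x y. \<pi> (inf x y) = inf (\<pi> x) (\<pi> y))"

text \<open>Characters take values in {0,1}, modelled as bool (0 = False, 1 = True).\<close>
definition character :: "('a::{semilattice_inf,order_bot} \<Rightarrow> bool) \<Rightarrow> bool" where
  "character \<phi> \<longleftrightarrow> (\<exists>x. \<phi> x) \<and> \<not> \<phi> bot \<and> (\<forall>x y. \<phi> (inf x y) = (\<phi> x \<and> \<phi> y))"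

definition boolean_character :: "('b::gen_boolean_algebra \<Rightarrow> bool) \<Rightarrow> bool" where
  "boolean_character \<chi> \<longleftrightarrow> (\<exists>a. \<chi> a) \<and> \<not> \<chi> bot
     \<and> (\<forall>a b. \<chi> (inf a b) = (\<chi> a \<and> \<chi> b)) \<and> (\<forall>a b. \<chi> (sup a b) = (\<chi> a \<or> \<chi> b))"

definition tight :: "('a::{semilattice_inf,order_bot} \<Rightarrow> 'b::gen_boolean_algebra) \<Rightarrow> ('a \<Rightarrow> bool) \<Rightarrow> bool" where
  "tight \<pi> \<phi> \<longleftrightarrow> (\<forall>n::nat. n \<ge> 1 \<longrightarrow> (\<forall>x (y::nat \<Rightarrow> 'a).
      \<pi> x \<le> Sup_fin ((\<lambda>i. \<pi> (y i)) ` {1..n}) \<longrightarrow> \<phi> x \<le> Sup_fin ((\<lambda>i. \<phi> (y i)) ` {1..n})))"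

end

theory Submission
  imports Defs
begin

lemma hom_Sup_fin_bool:
  fixes \<chi> :: "'b::lattice \<Rightarrow> bool"
  assumes "\<forall>a b. \<chi> (sup a b) = (\<chi> a \<or> \<chi> b)" "finite A" "A \<noteq> {}"
  shows "\<chi> (Sup_fin A) = (\<exists>a\<in>A. \<chi> a)"
  using assms(2,3)
proof (induction A rule: finite_ne_induct)
  case (singleton x) then show ?case by simp
next
  case (insert x F) then show ?case using assms(1) by (simp add: Sup_fin.insert)
qed

lemma Sup_fin_bool:
  fixes A :: "bool set"
  assumes "finite A" "A \<noteq> {}"
  shows "Sup_fin A = (True \<in> A)"
  using assms
proof (induction A rule: finite_ne_induct)
  case (singleton x) then show ?case by simp
next
  case (insert x F) then show ?case by (auto simp add: Sup_fin.insert)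
qed

lemma seq_of_set:
  assumes "finite S" "S \<noteq> {}"
  shows "\<exists>n::nat. n \<ge> 1 \<and> (\<exists>y::nat \<Rightarrow> 'c. y ` {1..n} = S)"
proof -
  obtain n f where S: "S = f ` {i. i < (n::nat)}"
    using finite_imp_nat_seg_image_inj_on[OF assms(1)] by blast
  with assms(2) have n: "n \<ge> 1" by (cases n) auto
  have "(\<lambda>i. f (i - 1)) ` {1..n} = f ` {i. i < n}"
  proof (rule set_eqI, rule iffI)
    fix z assume "z \<in> (\<lambda>i. f (i - 1)) ` {1..n}"
    then show "z \<in> f ` {i. i < n}" by auto
  next
    fix z assume "z \<in> f ` {i. i < n}"
    then obtain i where "i < n" "z = f i" by auto
    then show "z \<in> (\<lambda>i. f (i - 1)) ` {1..n}"
      by (intro image_eqI[of _ _ "Suc i"]) auto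
  qed
  with S n show ?thesis by blast
qed

theorem theorem15p11:
  fixes \<pi> :: "'a::{semilattice_inf,order_bot} \<Rightarrow> 'b::gen_boolean_algebra"
    and \<phi> :: "'a \<Rightarrow> bool"
  assumes "representation \<pi>" and "character \<phi>"
  shows "(\<exists>\<chi>. boolean_character \<chi> \<and> \<phi> = \<chi> \<circ> \<pi>) \<longleftrightarrow> tight \<pi> \<phi>"
proof
  assume "\<exists>\<chi>. boolean_character \<chi> \<and> \<phi> = \<chi> \<circ> \<pi>"
  then obtain \<chi> where bc: "boolean_character \<chi>" and eq: "\<phi> = \<chi> \<circ> \<pi>" by blast
  have sup: "\<forall>a b. \<chi> (sup a b) = (\<chi> a \<or> \<chi> b)" and inf: "\<forall>a b. \<chi> (inf a b) = (\<chi> a \<and> \<chi> b)"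
    using bc unfolding boolean_character_def by auto
  have mono: "\<chi> a \<Longrightarrow> a \<le> b \<Longrightarrow> \<chi> b" for a b
    using sup by (metis sup.absorb2)
  show "tight \<pi> \<phi>"
    unfolding tight_def
  proof (intro allI impI)
    fix n :: nat and x and y :: "nat \<Rightarrow> 'a"
    assume n: "n \<ge> 1" and le: "\<pi> x \<le> Sup_fin ((\<lambda>i. \<pi> (y i)) ` {1..n})"
    have ne: "{1..n} \<noteq> {}" using n by auto
    show "\<phi> x \<le> Sup_fin ((\<lambda>i. \<phi> (y i)) ` {1..n})"
    proof (cases "\<phi> x")
      case True
      then have "\<chi> (Sup_fin ((\<lambda>i. \<pi> (y i)) ` {1..n}))" using mono le eq by auto
      then obtain i where "i \<in> {1..n}" "\<phi> (y i)"
        using hom_Sup_fin_bool[OF sup, of "(\<lambda>i. \<pi> (y i)) ` {1..n}"] ne eq by auto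
      then show ?thesis using Sup_fin_bool[of "(\<lambda>i. \<phi> (y i)) ` {1..n}"] ne by force
    qed simp
  qed
next
  assume tight: "tight \<pi> \<phi>"
  have pbot: "\<pi> bot = bot" and pinf: "\<And>x y. \<pi> (inf x y) = inf (\<pi> x) (\<pi> y)"
    using assms(1) unfolding representation_def by auto
  have pmono: "x \<le> y \<Longrightarrow> \<pi> x \<le> \<pi> y" for x y
    using pinf by (metis inf.absorb_iff1)
  obtain x0 where x0: "\<phi> x0" using assms(2) unfolding character_def by auto
  have fbot: "\<not> \<phi> bot" and finf: "\<And>x y. \<phi> (inf x y) = (\<phi> x \<and> \<phi> y)"
    using assms(2) unfolding character_def by auto
  define F where "F = {b. \<exists>x. \<phi> x \<and> \<pi> x \<le> b}"
  define I where "I = {b. \<exists>S. finite S \<and> S \<noteq> {} \<and> (\<forall>y\<in>S. \<not> \<phi> y) \<and> b \<le> Sup_fin (\<pi> ` S)}"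
  have botI: "bot \<in> I" unfolding I_def using fbot by (intro CollectI exI[of _ "{bot}"]) auto
  have downI: "c \<in> I" if "b \<in> I" "c \<le> b" for b c
    using that unfolding I_def by (auto intro: order_trans)
  have supI: "sup b c \<in> I" if bI: "b \<in> I" and cI: "c \<in> I" for b c
  proof -
    obtain S where S: "finite S" "S \<noteq> {}" "\<forall>y\<in>S. \<not> \<phi> y" "b \<le> Sup_fin (\<pi> ` S)"
      using bI unfolding I_def by blast
    obtain T where T: "finite T" "T \<noteq> {}" "\<forall>y\<in>T. \<not> \<phi> y" "c \<le> Sup_fin (\<pi> ` T)"
      using cI unfolding I_def by blast
    have "Sup_fin (\<pi> ` (S \<union> T)) = sup (Sup_fin (\<pi> ` S)) (Sup_fin (\<pi> ` T))"
      using S T by (simp add: image_Un Sup_fin.union)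
    then have "sup b c \<le> Sup_fin (\<pi> ` (S \<union> T))" using S(4) T(4) by (metis le_supI1 le_supI2 le_sup_iff)
    then show ?thesis unfolding I_def using S T by (intro CollectI exI[of _ "S \<union> T"]) auto
  qed
  have FI: "F \<inter> I = {}"
  proof (rule ccontr)
    assume "F \<inter> I \<noteq> {}"
    then obtain b x S where x: "\<phi> x" "\<pi> x \<le> b" and S: "finite S" "S \<noteq> {}" "\<forall>y\<in>S. \<not> \<phi> y"
      "b \<le> Sup_fin (\<pi> ` S)" unfolding F_def I_def by auto
    obtain n and y :: "nat \<Rightarrow> 'a" where n: "n \<ge> 1" and y: "y ` {1..n} = S"
      using seq_of_set[OF S(1,2)] by blast
    have ne: "{1..n} \<noteq> {}" using n by auto
    have "\<pi> x \<le> Sup_fin ((\<lambda>i. \<pi> (y i)) ` {1..n})"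
    proof -
      have "(\<lambda>i. \<pi> (y i)) ` {1..n} = \<pi> ` S" using y by (simp add: image_image[symmetric])
      then show ?thesis using x(2) S(4) by simp
    qed
    then have "\<phi> x \<le> Sup_fin ((\<lambda>i. \<phi> (y i)) ` {1..n})"
      using tight n unfolding tight_def by blast
    then have "True \<in> (\<lambda>i. \<phi> (y i)) ` {1..n}"
      using x(1) Sup_fin_bool[of "(\<lambda>i. \<phi> (y i)) ` {1..n}"] ne by auto
    then show False using S(3) y by auto
  qed
  define A where "A = {G. F \<subseteq> G \<and> (\<forall>a b. a \<in> G \<longrightarrow> a \<le> b \<longrightarrow> b \<in> G)
                         \<and> (\<forall>a b. a \<in> G \<longrightarrow> b \<in> G \<longrightarrow> inf a b \<in> G) \<and> G \<inter> I = {}}"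
  have FA: "F \<in> A" unfolding A_def using FI
  proof (intro CollectI conjI allI impI)
    fix a b assume "a \<in> F" "a \<le> b" then show "b \<in> F" unfolding F_def by (auto intro: order_trans)
  next
    fix a b assume "a \<in> F" "b \<in> F"
    then obtain x y where "\<phi> x" "\<pi> x \<le> a" "\<phi> y" "\<pi> y \<le> b" unfolding F_def by auto
    then show "inf a b \<in> F" unfolding F_def using finf pinf
      by (intro CollectI exI[of _ "inf x y"]) (auto intro: le_infI1 le_infI2)
  qed (use FI in auto)
  have "\<exists>M\<in>A. \<forall>X\<in>A. M \<subseteq> X \<longrightarrow> X = M"
  proof (rule Zorn_Lemma2, intro ballI)
    fix C assume C: "C \<in> chains A"
    show "\<exists>U\<in>A. \<forall>X\<in>C. X \<subseteq> U"
    proof (cases "C = {}")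
      case True then show ?thesis using FA by auto
    next
      case False
      have CA: "C \<subseteq> A" and ch: "\<And>X Y. X \<in> C \<Longrightarrow> Y \<in> C \<Longrightarrow> X \<subseteq> Y \<or> Y \<subseteq> X"
        using C unfolding chains_def chain_subset_def by auto
      have "\<Union>C \<in> A" unfolding A_def
      proof (intro CollectI conjI allI impI)
        show "F \<subseteq> \<Union>C" using False CA unfolding A_def by blast
        show "\<Union>C \<inter> I = {}" using CA unfolding A_def by auto
      next
        fix a b assume "a \<in> \<Union>C" "a \<le> b" then show "b \<in> \<Union>C" using CA unfolding A_def by blast
      next
        fix a b assume "a \<in> \<Union>C" "b \<in> \<Union>C"
        then obtain X Y where XY: "X \<in> C" "Y \<in> C" "a \<in> X" "b \<in> Y" by auto
        from ch[OF XY(1,2)] show "inf a b \<in> \<Union>C"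
        proof
          assume "X \<subseteq> Y" then show ?thesis using XY CA unfolding A_def by blast
        next
          assume "Y \<subseteq> X" then show ?thesis using XY CA unfolding A_def by blast
        qed
      qed
      then show ?thesis by auto
    qed
  qed
  then obtain G where GA: "G \<in> A" and max: "\<And>X. X \<in> A \<Longrightarrow> G \<subseteq> X \<Longrightarrow> X = G" by blast
  have FG: "F \<subseteq> G" and up: "\<And>a b. a \<in> G \<Longrightarrow> a \<le> b \<Longrightarrow> b \<in> G"
    and infG: "\<And>a b. a \<in> G \<Longrightarrow> b \<in> G \<Longrightarrow> inf a b \<in> G" and GI: "G \<inter> I = {}"
    using GA unfolding A_def by auto
  have x0G: "\<pi> x0 \<in> G" using FG x0 unfolding F_def by auto
  have ext: "\<exists>g\<in>G. inf g a \<in> I" if "a \<notin> G" for a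
  proof (rule ccontr)
    assume nex: "\<not> ?thesis"
    define G' where "G' = {c. \<exists>g\<in>G. inf g a \<le> c}"
    have "G' \<in> A" unfolding A_def
    proof (intro CollectI conjI allI impI)
      show "F \<subseteq> G'" unfolding G'_def using FG by (auto intro: le_infI1)
    next
      fix c d assume "c \<in> G'" "c \<le> d" then show "d \<in> G'" unfolding G'_def by (auto intro: order_trans)
    next
      fix c d assume "c \<in> G'" "d \<in> G'"
      then obtain g h where gh: "g \<in> G" "inf g a \<le> c" "h \<in> G" "inf h a \<le> d" unfolding G'_def by auto
      have "inf (inf g h) a \<le> inf g a" "inf (inf g h) a \<le> inf h a"
        by (simp_all add: inf_mono le_infI1 le_infI2)
      then have "inf (inf g h) a \<le> inf c d" using gh by (meson le_inf_iff order_trans)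
      then show "inf c d \<in> G'" unfolding G'_def using infG[OF gh(1,3)] by blast
    next
      show "G' \<inter> I = {}"
      proof (rule ccontr)
        assume "G' \<inter> I \<noteq> {}"
        then obtain c g where "g \<in> G" "inf g a \<le> c" "c \<in> I" unfolding G'_def by auto
        then show False using nex downI by blast
      qed
    qed
    moreover have "G \<subseteq> G'" unfolding G'_def by (auto intro: le_infI1)
    ultimately have "G' = G" using max by blast
    moreover have "a \<in> G'" unfolding G'_def using x0G by auto
    ultimately show False using that by simp
  qed
  have prime: "a \<in> G \<or> b \<in> G" if "sup a b \<in> G" for a b
  proof (rule ccontr)
    assume "\<not> ?thesis"
    then obtain g h where g: "g \<in> G" "inf g a \<in> I" and h: "h \<in> G" "inf h b \<in> I" using ext by blast
    have "inf (inf g h) (sup a b) \<le> sup (inf g a) (inf h b)"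
    proof -
      have 1: "inf (inf g h) a \<le> inf g a" "inf (inf g h) b \<le> inf h b"
        by (simp_all add: inf_mono le_infI1 le_infI2)
      show ?thesis unfolding inf_sup_distrib1 using 1 by (meson sup_mono)
    qed
    then have "inf (inf g h) (sup a b) \<in> I" using supI[OF g(2) h(2)] downI by blast
    moreover have "inf (inf g h) (sup a b) \<in> G" using infG g h that by blast
    ultimately show False using GI by blast
  qed
  define \<chi> where "\<chi> = (\<lambda>b. b \<in> G)"
  have "boolean_character \<chi>" unfolding boolean_character_def \<chi>_def
  proof (intro conjI allI)
    show "\<exists>a. a \<in> G" using x0G by blast
    show "bot \<notin> G" using botI GI by blast
  next
    fix a b show "(inf a b \<in> G) = (a \<in> G \<and> b \<in> G)" using infG up by (meson inf_le1 inf_le2)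
  next
    fix a b show "(sup a b \<in> G) = (a \<in> G \<or> b \<in> G)" using prime up by (meson sup_ge1 sup_ge2)
  qed
  moreover have "\<phi> = \<chi> \<circ> \<pi>"
  proof
    fix x show "\<phi> x = (\<chi> \<circ> \<pi>) x"
    proof (cases "\<phi> x")
      case True then show ?thesis using FG unfolding F_def \<chi>_def by auto
    next
      case False
      then have "\<pi> x \<in> I" unfolding I_def by (intro CollectI exI[of _ "{x}"]) auto
      then show ?thesis using False GI unfolding \<chi>_def by auto
    qed
  qed
  ultimately show "\<exists>\<chi>. boolean_character \<chi> \<and> \<phi> = \<chi> \<circ> \<pi>" by blast
qed

end
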